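(* Let $(M^n,c,v^m d\nu)$ be a smooth conformal measure space with characteristic constant $\mu$, $n\ge3$, $m\in\mathbb{R}\setminus\{-n,1-n,2-n\}$. Then, in any scale, for every vector $x$ and tractor $I$, $$\nabla^W_xI=\nabla_xI+\frac{mv^{-1}}{m+n-2}\,I\lrcorner\big(B_x\wedge X\big),\qquad B_x=\nabla_xJ+\frac{\mu-(m-1)|J|^2}{2(m+n-1)v}\nabla_xX,$$ where $\nabla$ is the normal tractor connection and $K\lrcorner(I_1\wedge I_2)=\langle I_1,K\rangle I_2-\langle I_2,K\rangle I_1$. In particular, $\nabla^W$ is well defined (independent of the choice of scale) as an operator $\mathcal{T}\to T^*M\otimes\mathcal{T}$.
   Context: Conformal setting: $(M^n,c)$ a manifold with a conformal class of Riemannian metrics. $\mathcal{E}[w]$: conformal densities of weight $w$ (functions in a scale $g\in c$, multiplied by $e^{ws}$ under $g\mapsto e^{2s}g$). Standard tractor bundle $\mathbb{T}$: in a scale $\mathbb{T}\cong\mathbb{R}\oplus TM\oplus\mathbb{R}$, tractor $I$ with top $\sigma$, middle $\omega$ (vector field), bottom $\rho$, transforming as $\sigma\mapsto e^{s}\sigma$, $\omega\mapsto e^{-s}(\omega+\sigma\nabla s)$, $\rho\mapsto e^{-s}(\rho-g(\nabla s,\omega)-\tfrac12|\nabla s|^2\sigma)$. Tractor metric $\langle I,I\rangle=2\sigma\rho+|\omega|_g^2$. $X$: top and middle $0$, bottom $1$ (weight 1). Schouten $P=\frac1{n-2}(\mathrm{Ric}-\mathrm{J}g)$, $\mathrm{J}=\operatorname{tr}P$.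 Normal tractor connection: $\nabla_xI$ has top $x\sigma-g(\omega,x)$, middle $\nabla_x\omega+\sigma P(x)+\rho x$, bottom $x\rho-P(x,\omega)$ ($P(x)$ dual to $P(x,\cdot)$); it is scale-independent. Tractor-$D$: $\mathbb{D}v$ for $v\in\mathcal{E}[1]$ has top $nv$, middle $n\nabla v$, bottom $-(\Delta v+\mathrm{J}v)$. SCMS: positive $v\in\mathcal{E}[1]$, $m\in\mathbb{R}$, fixed constant $\mu$; in a scale $v$ is a positive function. $\mathrm{Ric}^m_\phi=\mathrm{Ric}-mv^{-1}\nabla^2v$, $R^m_\phi=R-2mv^{-1}\Delta v-m(m-1)v^{-2}|\nabla v|^2$, $\mathrm{J}^W=\frac{1}{2(m+n-1)}(R^m_\phi+m\mu v^{-2})$, $P^W=\frac{1}{m+n-2}(\mathrm{Ric}^m_\phi-\mathrm{J}^Wg)$. $J=\frac1n\mathbb{D}v$. The $W$-tractor connection is defined in each scale by: $\nabla^W_xI$ has top $x\sigma-g(\omega,x)$, middle $\nabla_x\omega+\sigma P^W(x)+\rho x$, bottom $x\rho-P^W(x,\omega)$. *)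

theory Defs
  imports "HOL-Analysis.Analysis"
begin

text \<open>Local (single chart, single scale) setting: the scale g is a smooth Riemannian
metric on an open set U of real^'n, given as a matrix-valued function; n = CARD('n).
Tractors in the scale g are triples (sigma, omega, rho).\<close>

type_synonym 'n tractor = "real \<times> (real^'n) \<times> real"

definition dimn :: "'n::finite itself \<Rightarrow> real" where
  "dimn _ = real CARD('n)"

definition pd :: "(real^'n::finite \<Rightarrow> real) \<Rightarrow> 'n \<Rightarrow> real^'n \<Rightarrow> real" where
  "pd f i p = frechet_derivative f (at p) (axis i 1)"

definition dd :: "(real^'n::finite \<Rightarrow> 'b::real_normed_vector) \<Rightarrow> real^'n \<Rightarrow> real^'n \<Rightarrow> 'b" where
  "dd f p x = frechet_derivative f (at p) x"

fun iter_pd :: "'n list \<Rightarrow> (real^'n::finite \<Rightarrow> real) \<Rightarrow> real^'n \<Rightarrow> real" where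
  "iter_pd [] f = f"
| "iter_pd (i # ds) f = pd (iter_pd ds f) i"

definition smooth_on :: "(real^'n::finite) set \<Rightarrow> (real^'n \<Rightarrow> real) \<Rightarrow> bool" where
  "smooth_on U f \<longleftrightarrow> (\<forall>ds. \<forall>p\<in>U. iter_pd ds f differentiable (at p))"

definition smooth_vf_on :: "(real^'n::finite) set \<Rightarrow> (real^'n \<Rightarrow> real^'n) \<Rightarrow> bool" where
  "smooth_vf_on U w \<longleftrightarrow> (\<forall>k. smooth_on U (\<lambda>q. w q $ k))"

definition riem_metric_on :: "(real^'n::finite) set \<Rightarrow> (real^'n \<Rightarrow> real^'n^'n) \<Rightarrow> bool" where
  "riem_metric_on U g \<longleftrightarrow>
     (\<forall>i j. smooth_on U (\<lambda>q. g q $ i $ j)) \<and>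
     (\<forall>p\<in>U. (\<forall>i j. g p $ i $ j = g p $ j $ i) \<and> (\<forall>x. x \<noteq> 0 \<longrightarrow> x \<bullet> (g p *v x) > 0))"

definition gin :: "(real^'n::finite \<Rightarrow> real^'n^'n) \<Rightarrow> real^'n \<Rightarrow> real^'n \<Rightarrow> real^'n \<Rightarrow> real" where
  "gin g p a b = a \<bullet> (g p *v b)"

definition ginv :: "(real^'n::finite \<Rightarrow> real^'n^'n) \<Rightarrow> real^'n \<Rightarrow> real^'n^'n" where
  "ginv g p = matrix_inv (g p)"

definition Gam :: "(real^'n::finite \<Rightarrow> real^'n^'n) \<Rightarrow> real^'n \<Rightarrow> 'n \<Rightarrow> 'n \<Rightarrow> 'n \<Rightarrow> real" where
  "Gam g p k i j = (1/2) * (\<Sum>l\<in>UNIV. ginv g p $ k $ l *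
      (pd (\<lambda>q. g q $ j $ l) i p + pd (\<lambda>q. g q $ i $ l) j p - pd (\<lambda>q. g q $ i $ j) l p))"

definition Ric :: "(real^'n::finite \<Rightarrow> real^'n^'n) \<Rightarrow> real^'n \<Rightarrow> 'n \<Rightarrow> 'n \<Rightarrow> real" where
  "Ric g p i j = (\<Sum>k\<in>UNIV. pd (\<lambda>q. Gam g q k i j) k p - pd (\<lambda>q. Gam g q k k i) j p
      + (\<Sum>l\<in>UNIV. Gam g p k k l * Gam g p l i j - Gam g p k j l * Gam g p l k i))"

definition Scal :: "(real^'n::finite \<Rightarrow> real^'n^'n) \<Rightarrow> real^'n \<Rightarrow> real" where
  "Scal g p = (\<Sum>i\<in>UNIV. \<Sum>j\<in>UNIV. ginv g p $ i $ j * Ric g p i j)"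

text \<open>J = tr P; solving P = (Ric - J g)/(n-2), J = tr P gives J = R/(2(n-1))\<close>
definition Jsc :: "(real^'n::finite \<Rightarrow> real^'n^'n) \<Rightarrow> real^'n \<Rightarrow> real" where
  "Jsc g p = Scal g p / (2 * (dimn TYPE('n) - 1))"

definition Sch :: "(real^'n::finite \<Rightarrow> real^'n^'n) \<Rightarrow> real^'n \<Rightarrow> 'n \<Rightarrow> 'n \<Rightarrow> real" where
  "Sch g p i j = (Ric g p i j - Jsc g p * g p $ i $ j) / (dimn TYPE('n) - 2)"

definition cov :: "(real^'n::finite \<Rightarrow> real^'n^'n) \<Rightarrow> real^'n \<Rightarrow> (real^'n \<Rightarrow> real^'n) \<Rightarrow> real^'n \<Rightarrow> real^'n" where
  "cov g p w x = dd w p x + (\<chi> k. \<Sum>i\<in>UNIV. \<Sum>j\<in>UNIV. Gam g p k i j * x $ i * w p $ j)"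

definition grad :: "(real^'n::finite \<Rightarrow> real^'n^'n) \<Rightarrow> (real^'n \<Rightarrow> real) \<Rightarrow> real^'n \<Rightarrow> real^'n" where
  "grad g f p = ginv g p *v (\<chi> i. pd f i p)"

definition hess :: "(real^'n::finite \<Rightarrow> real^'n^'n) \<Rightarrow> (real^'n \<Rightarrow> real) \<Rightarrow> real^'n \<Rightarrow> 'n \<Rightarrow> 'n \<Rightarrow> real" where
  "hess g f p i j = pd (\<lambda>q. pd f j q) i p - (\<Sum>k\<in>UNIV. Gam g p k i j * pd f k p)"

definition lap :: "(real^'n::finite \<Rightarrow> real^'n^'n) \<Rightarrow> (real^'n \<Rightarrow> real) \<Rightarrow> real^'n \<Rightarrow> real" where
  "lap g f p = (\<Sum>i\<in>UNIV. \<Sum>j\<in>UNIV. ginv g p $ i $ j * hess g f p i j)"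

definition Ric_phi :: "(real^'n::finite \<Rightarrow> real^'n^'n) \<Rightarrow> (real^'n \<Rightarrow> real) \<Rightarrow> real \<Rightarrow> real^'n \<Rightarrow> 'n \<Rightarrow> 'n \<Rightarrow> real" where
  "Ric_phi g v m p i j = Ric g p i j - m / v p * hess g v p i j"

definition R_phi :: "(real^'n::finite \<Rightarrow> real^'n^'n) \<Rightarrow> (real^'n \<Rightarrow> real) \<Rightarrow> real \<Rightarrow> real^'n \<Rightarrow> real" where
  "R_phi g v m p = Scal g p - 2 * m / v p * lap g v p
      - m * (m - 1) / (v p)^2 * gin g p (grad g v p) (grad g v p)"

definition JW :: "(real^'n::finite \<Rightarrow> real^'n^'n) \<Rightarrow> (real^'n \<Rightarrow> real) \<Rightarrow> real \<Rightarrow> real \<Rightarrow> real^'n \<Rightarrow> real" where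
  "JW g v m \<mu> p = (R_phi g v m p + m * \<mu> / (v p)^2) / (2 * (m + dimn TYPE('n) - 1))"

definition PW :: "(real^'n::finite \<Rightarrow> real^'n^'n) \<Rightarrow> (real^'n \<Rightarrow> real) \<Rightarrow> real \<Rightarrow> real \<Rightarrow> real^'n \<Rightarrow> 'n \<Rightarrow> 'n \<Rightarrow> real" where
  "PW g v m \<mu> p i j = (Ric_phi g v m p i j - JW g v m \<mu> p * g p $ i $ j) / (m + dimn TYPE('n) - 2)"

text \<open>Tractor connection in the scale g built from a symmetric 2-tensor Pt
  (Pt = Sch gives the normal tractor connection, Pt = PW gives the W-tractor connection).
  Pt(x) is the vector g-dual to Pt(x,.), and Pt(x,w) = sum x^i Pt_ij w^j.\<close>
definition tconn :: "(real^'n::finite \<Rightarrow> real^'n^'n) \<Rightarrow> (real^'n \<Rightarrow> 'n \<Rightarrow> 'n \<Rightarrow> real)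
     \<Rightarrow> real^'n \<Rightarrow> (real^'n \<Rightarrow> 'n tractor) \<Rightarrow> real^'n \<Rightarrow> 'n tractor" where
  "tconn g Pt p I x =
    (let \<sigma> = (\<lambda>q. fst (I q)); w = (\<lambda>q. fst (snd (I q))); \<rho> = (\<lambda>q. snd (snd (I q)));
         Pmat = (\<chi> i j. Pt p i j)
     in (dd \<sigma> p x - gin g p (w p) x,
         cov g p w x + \<sigma> p *\<^sub>R (ginv g p *v (Pmat *v x)) + \<rho> p *\<^sub>R x,
         dd \<rho> p x - x \<bullet> (Pmat *v w p)))"

definition tmetric :: "(real^'n::finite \<Rightarrow> real^'n^'n) \<Rightarrow> real^'n \<Rightarrow> 'n tractor \<Rightarrow> 'n tractor \<Rightarrow> real" where
  "tmetric g p I K = fst I * snd (snd K) + snd (snd I) * fst K + gin g p (fst (snd I)) (fst (snd K))"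

definition tcontr :: "(real^'n::finite \<Rightarrow> real^'n^'n) \<Rightarrow> real^'n \<Rightarrow> 'n tractor \<Rightarrow> 'n tractor \<Rightarrow> 'n tractor \<Rightarrow> 'n tractor" where
  "tcontr g p K I1 I2 = tmetric g p I1 K *\<^sub>R I2 - tmetric g p I2 K *\<^sub>R I1"

definition Xtr :: "real^'n::finite \<Rightarrow> 'n tractor" where
  "Xtr q = (0, 0, 1)"

text \<open>J = (1/n) D v, D v = (n v, n grad v, -(Lap v + J v))\<close>
definition Jtr :: "(real^'n::finite \<Rightarrow> real^'n^'n) \<Rightarrow> (real^'n \<Rightarrow> real) \<Rightarrow> real^'n \<Rightarrow> 'n tractor" where
  "Jtr g v q = (1 / dimn TYPE('n)) *\<^sub>R
     (dimn TYPE('n) * v q, dimn TYPE('n) *\<^sub>R grad g v q, - (lap g v q + Jsc g q * v q))"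

definition Btr :: "(real^'n::finite \<Rightarrow> real^'n^'n) \<Rightarrow> (real^'n \<Rightarrow> real) \<Rightarrow> real \<Rightarrow> real \<Rightarrow> real^'n \<Rightarrow> real^'n \<Rightarrow> 'n tractor" where
  "Btr g v m \<mu> p x = tconn g (Sch g) p (Jtr g v) x
     + ((\<mu> - (m - 1) * tmetric g p (Jtr g v p) (Jtr g v p)) / (2 * (m + dimn TYPE('n) - 1) * v p))
       *\<^sub>R tconn g (Sch g) p Xtr x"

end

theory Submission
  imports Defs
begin


lemma pd_has: "(f has_derivative f') (at p) \<Longrightarrow> pd f i p = f' (axis i 1)"
  unfolding pd_def using frechet_derivative_at by metis

lemma pd_local:
  assumes "open S" "p \<in> S" "\<And>q. q \<in> S \<Longrightarrow> f q = h q"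
  shows "pd f i p = pd h i p"
proof -
  have "\<And>f'. (f has_derivative f') (at p) \<longleftrightarrow> (h has_derivative f') (at p)"
    using assms has_derivative_transform_within_open by (metis (no_types, lifting))
  then show ?thesis unfolding pd_def frechet_derivative_def by simp
qed

lemma diff_local:
  assumes "open S" "p \<in> S" "\<And>q. q \<in> S \<Longrightarrow> f q = h q" "f differentiable (at p)"
  shows "h differentiable (at p)"
  using assms has_derivative_transform_within_open unfolding differentiable_def by metis

lemma fd_expand:
  fixes f :: "real^'n::finite \<Rightarrow> real"
  assumes "f differentiable (at p)"
  shows "frechet_derivative f (at p) x = (\<Sum>i\<in>UNIV. x$i * pd f i p)"
proof -
  let ?L = "frechet_derivative f (at p)"
  have lin: "linear ?L" using assms frechet_derivative_works has_derivative_linear by blast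
  have "?L x = ?L (\<Sum>i\<in>UNIV. x$i *\<^sub>R axis i 1)"
    using basis_expansion[of x] by (simp add: scalar_mult_eq_scaleR)
  also have "\<dots> = (\<Sum>i\<in>UNIV. x$i * ?L (axis i 1))"
    using lin by (simp add: linear_sum linear_scale)
  finally show ?thesis unfolding pd_def .
qed

lemma dd_expand:
  fixes f :: "real^'n::finite \<Rightarrow> real"
  assumes "f differentiable (at p)"
  shows "dd f p x = (\<Sum>i\<in>UNIV. x$i * pd f i p)"
  using fd_expand[OF assms] unfolding dd_def .

lemma has_derivative_vecI:
  fixes w :: "real^'n::finite \<Rightarrow> real^'m::finite"
  assumes "\<And>k. ((\<lambda>q. w q $ k) has_derivative D k) (at p)"
  shows "(w has_derivative (\<lambda>h. \<chi> k. D k h)) (at p)"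
proof (rule has_derivative_componentwise_within[THEN iffD2], rule ballI)
  fix b :: "real^'m" assume "b \<in> Basis"
  then obtain k where b: "b = axis k 1" unfolding Basis_vec_def by auto
  have e1: "(\<lambda>x. w x \<bullet> b) = (\<lambda>x. w x $ k)" by (simp add: b inner_axis)
  have e2: "(\<lambda>x. (\<chi> k. D k x) \<bullet> b) = D k" by (simp add: b inner_axis)
  show "((\<lambda>x. w x \<bullet> b) has_derivative (\<lambda>x. (\<chi> k. D k x) \<bullet> b)) (at p)"
    unfolding e1 e2 by (rule assms)
qed

lemma dd_vec:
  fixes w :: "real^'n::finite \<Rightarrow> real^'m::finite"
  assumes "\<And>k. (\<lambda>q. w q $ k) differentiable (at p)"
  shows "dd w p x = (\<chi> k. \<Sum>i\<in>UNIV. x$i * pd (\<lambda>q. w q $ k) i p)"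
proof -
  have "\<And>k. ((\<lambda>q. w q $ k) has_derivative frechet_derivative (\<lambda>q. w q $ k) (at p)) (at p)"
    using assms by (simp add: frechet_derivative_works)
  then have "(w has_derivative (\<lambda>h. \<chi> k. frechet_derivative (\<lambda>q. w q $ k) (at p) h)) (at p)"
    by (rule has_derivative_vecI)
  then have "(\<lambda>h. \<chi> k. frechet_derivative (\<lambda>q. w q $ k) (at p) h) = frechet_derivative w (at p)"
    by (rule frechet_derivative_at)
  then have "dd w p x = (\<chi> k. frechet_derivative (\<lambda>q. w q $ k) (at p) x)"
    unfolding dd_def by (rule sym[THEN fun_cong])
  then show ?thesis using fd_expand[OF assms] by simp
qed

lemma dd_const:
  fixes p :: "real^'n::finite" and c :: "'b::real_normed_vector"
  shows "dd (\<lambda>q. c) p x = c - c"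
proof -
  have "((\<lambda>q. c) has_derivative (\<lambda>h. 0)) (at p)" by simp
  then show ?thesis unfolding dd_def using frechet_derivative_at by (metis diff_self)
qed

lemma pd_mult:
  fixes f h :: "real^'n::finite \<Rightarrow> real"
  assumes "f differentiable (at p)" "h differentiable (at p)"
  shows "pd (\<lambda>q. f q * h q) i p = pd f i p * h p + f p * pd h i p"
proof -
  obtain F H where F: "(f has_derivative F) (at p)" and H: "(h has_derivative H) (at p)"
    using assms unfolding differentiable_def by blast
  have "pd (\<lambda>q. f q * h q) i p = f p * H (axis i 1) + F (axis i 1) * h p"
    by (rule pd_has[OF has_derivative_mult[OF F H]])
  then show ?thesis using pd_has[OF F] pd_has[OF H] by simp
qed

lemma pd_sum:
  fixes f :: "'a \<Rightarrow> real^'n::finite \<Rightarrow> real"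
  assumes "finite S" "\<And>k. k \<in> S \<Longrightarrow> f k differentiable (at p)"
  shows "pd (\<lambda>q. \<Sum>k\<in>S. f k q) i p = (\<Sum>k\<in>S. pd (f k) i p)"
proof -
  have "\<And>k. k \<in> S \<Longrightarrow> (f k has_derivative frechet_derivative (f k) (at p)) (at p)"
    using assms frechet_derivative_works by blast
  then have "((\<lambda>q. \<Sum>k\<in>S. f k q) has_derivative (\<lambda>y. \<Sum>k\<in>S. frechet_derivative (f k) (at p) y)) (at p)"
    by (rule has_derivative_sum)
  then have "pd (\<lambda>q. \<Sum>k\<in>S. f k q) i p = (\<Sum>k\<in>S. frechet_derivative (f k) (at p) (axis i 1))"
    by (rule pd_has)
  then show ?thesis by (simp add: pd_def)
qed

lemma pd_const: "pd (\<lambda>q. c) i p = 0"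
proof -
  have "pd (\<lambda>q. c) i p = (\<lambda>h. 0) (axis i 1)" by (rule pd_has) simp
  then show ?thesis by simp
qed

lemma pd_cmult:
  fixes f :: "real^'n::finite \<Rightarrow> real"
  assumes "f differentiable (at p)"
  shows "pd (\<lambda>q. c * f q) i p = c * pd f i p"
  using pd_mult[OF differentiable_const assms, of c i] by (simp add: pd_const)

lemma pd_add:
  fixes f h :: "real^'n::finite \<Rightarrow> real"
  assumes "f differentiable (at p)" "h differentiable (at p)"
  shows "pd (\<lambda>q. f q + h q) i p = pd f i p + pd h i p"
proof -
  obtain F H where F: "(f has_derivative F) (at p)" and H: "(h has_derivative H) (at p)"
    using assms unfolding differentiable_def by blast
  have "pd (\<lambda>q. f q + h q) i p = F (axis i 1) + H (axis i 1)"
    by (rule pd_has[OF has_derivative_add[OF F H]])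
  then show ?thesis using pd_has[OF F] pd_has[OF H] by simp
qed

lemma pd_diff:
  fixes f h :: "real^'n::finite \<Rightarrow> real"
  assumes "f differentiable (at p)" "h differentiable (at p)"
  shows "pd (\<lambda>q. f q - h q) i p = pd f i p - pd h i p"
proof -
  obtain F H where F: "(f has_derivative F) (at p)" and H: "(h has_derivative H) (at p)"
    using assms unfolding differentiable_def by blast
  have "pd (\<lambda>q. f q - h q) i p = F (axis i 1) - H (axis i 1)"
    by (rule pd_has[OF has_derivative_diff[OF F H]])
  then show ?thesis using pd_has[OF F] pd_has[OF H] by simp
qed



lemma schwarz_half:
  fixes f :: "real^'n::finite \<Rightarrow> real"
  assumes U: "open U" "p \<in> U" and fd: "\<forall>q\<in>U. f differentiable (at q)"
    and fi: "pd f i differentiable (at p)" and e: "e > 0"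
  shows "\<exists>h0>0. \<forall>h. 0 < h \<and> h < h0 \<longrightarrow>
    \<bar>(f (p + h *\<^sub>R axis i 1 + h *\<^sub>R axis j 1) - f (p + h *\<^sub>R axis i 1) - f (p + h *\<^sub>R axis j 1) + f p)
      - h\<^sup>2 * pd (pd f i) j p\<bar> \<le> e * h\<^sup>2"
proof -
  define a :: "real^'n" where "a = axis i 1"
  define b :: "real^'n" where "b = axis j 1"
  have na: "norm a = 1" and nb: "norm b = 1" by (simp_all add: a_def b_def)
  obtain r where r: "r > 0" "ball p r \<subseteq> U" using U open_contains_ball by blast
  define D where "D = frechet_derivative (pd f i) (at p)"
  have Dh: "(pd f i has_derivative D) (at p)" using fi D_def frechet_derivative_works by blast
  have Dlin: "linear D" using Dh has_derivative_linear by blast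
  have c: "pd (pd f i) j p = D b" unfolding pd_def D_def b_def ..
  obtain d where d: "d > 0" "\<forall>y. norm (y - p) < d \<longrightarrow> norm (pd f i y - pd f i p - D (y - p)) \<le> e/3 * norm (y - p)"
    using Dh e unfolding has_derivative_at_alt by (meson divide_pos_pos zero_less_numeral)
  show ?thesis
  proof (intro exI[of _ "min d r / 2"] conjI allI impI)
    show "min d r / 2 > 0" using d r by simp
    fix h :: real assume h: "0 < h \<and> h < min d r / 2"
    define \<phi> where "\<phi> t = f (p + t *\<^sub>R a + h *\<^sub>R b) - f (p + t *\<^sub>R a)" for t
    define q1 where "q1 t = p + t *\<^sub>R a + h *\<^sub>R b" for t
    define q2 where "q2 t = p + t *\<^sub>R a" for t
    have nq1: "norm (q1 t - p) \<le> t + h" if "0 \<le> t" for t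
    proof -
      have "norm (q1 t - p) = norm (t *\<^sub>R a + h *\<^sub>R b)" by (simp add: q1_def algebra_simps)
      also have "\<dots> \<le> norm (t *\<^sub>R a) + norm (h *\<^sub>R b)" by (rule norm_triangle_ineq)
      also have "\<dots> = t + h" using na nb that h by simp
      finally show ?thesis .
    qed
    have nq2: "norm (q2 t - p) = t" if "0 \<le> t" for t
      using na that by (simp add: q2_def)
    have inU: "q1 t \<in> U \<and> q2 t \<in> U" if "0 \<le> t" "t \<le> h" for t
    proof -
      have "norm (q1 t - p) < r" "norm (q2 t - p) < r" using nq1[OF that(1)] nq2[OF that(1)] that h by auto
      then show ?thesis using r by (auto simp: dist_norm norm_minus_commute)
    qed
    define F where "F t = (\<lambda>s. frechet_derivative f (at (q1 t)) (s *\<^sub>R a) - frechet_derivative f (at (q2 t)) (s *\<^sub>R a))" for t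
    have der: "(\<phi> has_derivative F t) (at t within {0..h})" if "0 \<le> t" "t \<le> h" for t
    proof -
      have f1: "(f has_derivative frechet_derivative f (at (q1 t))) (at (q1 t))"
        using fd inU[OF that] frechet_derivative_works by blast
      have f2: "(f has_derivative frechet_derivative f (at (q2 t))) (at (q2 t))"
        using fd inU[OF that] frechet_derivative_works by blast
      have l1: "((\<lambda>t. p + t *\<^sub>R a + h *\<^sub>R b) has_derivative (\<lambda>s. s *\<^sub>R a)) (at t within {0..h})"
        by (auto intro!: derivative_eq_intros)
      have l2: "((\<lambda>t. p + t *\<^sub>R a) has_derivative (\<lambda>s. s *\<^sub>R a)) (at t within {0..h})"
        by (auto intro!: derivative_eq_intros)
      have "((\<lambda>t. f (p + t *\<^sub>R a + h *\<^sub>R b)) has_derivative (\<lambda>s. frechet_derivative f (at (q1 t)) (s *\<^sub>R a))) (at t within {0..h})"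
        using has_derivative_compose[OF l1, of f] f1 unfolding q1_def by blast
      moreover have "((\<lambda>t. f (p + t *\<^sub>R a)) has_derivative (\<lambda>s. frechet_derivative f (at (q2 t)) (s *\<^sub>R a))) (at t within {0..h})"
        using has_derivative_compose[OF l2, of f] f2 unfolding q2_def by blast
      ultimately show ?thesis unfolding \<phi>_def F_def by (rule has_derivative_diff)
    qed
    obtain t where t: "t \<in> {0<..<h}" "\<phi> h - \<phi> 0 = F t (h - 0)"
      using mvt_simple[of 0 h \<phi> F] der h by auto
    have dq: "f differentiable (at (q1 t))" "f differentiable (at (q2 t))" using fd inU[of t] t by auto
    have lin1: "linear (frechet_derivative f (at (q1 t)))" and lin2: "linear (frechet_derivative f (at (q2 t)))"
      using dq frechet_derivative_works has_derivative_linear by blast+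
    have Fa: "F t h = h * (pd f i (q1 t) - pd f i (q2 t))"
      unfolding F_def pd_def a_def[symmetric] using lin1 lin2 by (simp add: linear_scale right_diff_distrib)
    have Delta: "\<phi> h - \<phi> 0 = f (p + h *\<^sub>R axis i 1 + h *\<^sub>R axis j 1) - f (p + h *\<^sub>R axis i 1) - f (p + h *\<^sub>R axis j 1) + f p"
    proof -
      have "\<phi> h - \<phi> 0 = f (p + h *\<^sub>R a + h *\<^sub>R b) - f (p + h *\<^sub>R a) - f (p + h *\<^sub>R b) + f p"
        unfolding \<phi>_def by simp
      then show ?thesis unfolding a_def b_def .
    qed
    have t0: "0 < t" "t < h" using t by auto
    have e1: "norm (pd f i (q1 t) - pd f i p - D (q1 t - p)) \<le> e/3 * norm (q1 t - p)"
      using d nq1[of t] t0 h by auto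
    have e2: "norm (pd f i (q2 t) - pd f i p - D (q2 t - p)) \<le> e/3 * norm (q2 t - p)"
      using d(2)[rule_format, of "q2 t"] nq2[of t] t0 h by auto
    have Dq: "D (q1 t - p) - D (q2 t - p) = h * D b"
    proof -
      have eq: "q1 t - p = (q2 t - p) + h *\<^sub>R b" by (simp add: q1_def q2_def algebra_simps)
      have "D (q1 t - p) = D (q2 t - p) + D (h *\<^sub>R b)" unfolding eq by (rule linear_add[OF Dlin])
      then show ?thesis using linear_scale[OF Dlin, of h b] by simp
    qed
    have "\<bar>pd f i (q1 t) - pd f i (q2 t) - h * D b\<bar>
        = \<bar>(pd f i (q1 t) - pd f i p - D (q1 t - p)) - (pd f i (q2 t) - pd f i p - D (q2 t - p))\<bar>"
      using Dq by (simp add: algebra_simps)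
    also have "\<dots> \<le> e/3 * norm (q1 t - p) + e/3 * norm (q2 t - p)"
      by (rule order_trans[OF abs_triangle_ineq4 add_mono]) (use e1 e2 in simp_all)
    also have "\<dots> \<le> e/3 * (t + h) + e/3 * t"
      using nq1[of t] nq2[of t] t0 e by (intro add_mono mult_left_mono) auto
    also have "\<dots> \<le> e * h" using t0 e by (simp add: field_simps)
    finally have est: "\<bar>pd f i (q1 t) - pd f i (q2 t) - h * D b\<bar> \<le> e * h" .
    have "\<bar>(\<phi> h - \<phi> 0) - h\<^sup>2 * D b\<bar> = h * \<bar>pd f i (q1 t) - pd f i (q2 t) - h * D b\<bar>"
    proof -
      have "(\<phi> h - \<phi> 0) - h\<^sup>2 * D b = h * (pd f i (q1 t) - pd f i (q2 t) - h * D b)"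
        using t(2) Fa by (simp add: power2_eq_square algebra_simps)
      then show ?thesis using h by (simp add: abs_mult)
    qed
    also have "\<dots> \<le> h * (e * h)" using est h by (intro mult_left_mono) auto
    also have "h * (e * h) = e * h\<^sup>2" by (simp add: power2_eq_square)
    finally show "\<bar>(f (p + h *\<^sub>R axis i 1 + h *\<^sub>R axis j 1) - f (p + h *\<^sub>R axis i 1) - f (p + h *\<^sub>R axis j 1) + f p)
      - h\<^sup>2 * pd (pd f i) j p\<bar> \<le> e * h\<^sup>2"
      unfolding Delta c[symmetric] .
  qed
qed

lemma schwarz:
  fixes f :: "real^'n::finite \<Rightarrow> real"
  assumes U: "open U" "p \<in> U" and fd: "\<forall>q\<in>U. f differentiable (at q)"
    and fi: "pd f i differentiable (at p)" and fj: "pd f j differentiable (at p)"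
  shows "pd (pd f i) j p = pd (pd f j) i p"
proof -
  let ?c1 = "pd (pd f i) j p" and ?c2 = "pd (pd f j) i p"
  have key: "\<bar>?c1 - ?c2\<bar> \<le> 2 * e" if e: "e > 0" for e
  proof -
    obtain h1 where h1: "h1 > 0" "\<forall>h. 0 < h \<and> h < h1 \<longrightarrow>
      \<bar>(f (p + h *\<^sub>R axis i 1 + h *\<^sub>R axis j 1) - f (p + h *\<^sub>R axis i 1) - f (p + h *\<^sub>R axis j 1) + f p)
      - h\<^sup>2 * ?c1\<bar> \<le> e * h\<^sup>2"
      using schwarz_half[OF U fd fi e] by blast
    obtain h2 where h2: "h2 > 0" "\<forall>h. 0 < h \<and> h < h2 \<longrightarrow>
      \<bar>(f (p + h *\<^sub>R axis j 1 + h *\<^sub>R axis i 1) - f (p + h *\<^sub>R axis j 1) - f (p + h *\<^sub>R axis i 1) + f p)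
      - h\<^sup>2 * ?c2\<bar> \<le> e * h\<^sup>2"
      using schwarz_half[OF U fd fj e] by blast
    define h where "h = min h1 h2 / 2"
    have h: "0 < h" "h < h1" "h < h2" using h1 h2 by (auto simp: h_def)
    define \<Delta> where "\<Delta> = f (p + h *\<^sub>R axis i 1 + h *\<^sub>R axis j 1) - f (p + h *\<^sub>R axis i 1) - f (p + h *\<^sub>R axis j 1) + f p"
    have dsym: "\<Delta> = f (p + h *\<^sub>R axis j 1 + h *\<^sub>R axis i 1) - f (p + h *\<^sub>R axis j 1) - f (p + h *\<^sub>R axis i 1) + f p"
      unfolding \<Delta>_def by (simp add: add_ac)
    have a1: "\<bar>\<Delta> - h\<^sup>2 * ?c1\<bar> \<le> e * h\<^sup>2"
      unfolding \<Delta>_def by (rule h1(2)[rule_format, OF conjI[OF h(1) h(2)]])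
    have a2: "\<bar>\<Delta> - h\<^sup>2 * ?c2\<bar> \<le> e * h\<^sup>2"
      unfolding dsym by (rule h2(2)[rule_format, OF conjI[OF h(1) h(3)]])
    have "h\<^sup>2 * \<bar>?c1 - ?c2\<bar> \<le> h\<^sup>2 * (2 * e)"
    proof -
      have "h\<^sup>2 * \<bar>?c1 - ?c2\<bar> = \<bar>h\<^sup>2 * (?c1 - ?c2)\<bar>"
        by (simp add: abs_mult)
      also have "\<dots> = \<bar>(\<Delta> - h\<^sup>2 * ?c2) - (\<Delta> - h\<^sup>2 * ?c1)\<bar>"
        by (simp add: algebra_simps)
      also have "\<dots> \<le> e * h\<^sup>2 + e * h\<^sup>2" using a1 a2 by linarith
      finally show ?thesis by (simp add: mult_ac)
    qed
    then show ?thesis using h by (simp add: mult_le_cancel_left)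
  qed
  have "\<And>e. e > 0 \<Longrightarrow> \<bar>?c1 - ?c2\<bar> \<le> 0 + e"
  proof -
    fix e :: real assume "e > 0"
    then have "\<bar>?c1 - ?c2\<bar> \<le> 2 * (e/2)" using key[of "e/2"] by simp
    then show "\<bar>?c1 - ?c2\<bar> \<le> 0 + e" by simp
  qed
  then have "\<bar>?c1 - ?c2\<bar> \<le> 0"
    by (rule field_le_epsilon)
  then show ?thesis by simp
qed



lemma inv_props:
  fixes A :: "real^'n::finite^'n"
  assumes "invertible A"
  shows "A ** matrix_inv A = mat 1" "matrix_inv A ** A = mat 1"
proof -
  have "\<exists>A'. A ** A' = mat 1 \<and> A' ** A = mat 1" using assms unfolding invertible_def .
  then have "A ** matrix_inv A = mat 1 \<and> matrix_inv A ** A = mat 1"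
    unfolding matrix_inv_def by (rule someI_ex)
  then show "A ** matrix_inv A = mat 1" "matrix_inv A ** A = mat 1" by auto
qed

lemma differentiable_prod':
  fixes f :: "'i \<Rightarrow> 'a::real_normed_vector \<Rightarrow> real"
  assumes "\<And>i. i \<in> I \<Longrightarrow> f i differentiable (at x)"
  shows "(\<lambda>x. \<Prod>i\<in>I. f i x) differentiable (at x)"
proof -
  have "\<And>i. i \<in> I \<Longrightarrow> (f i has_derivative frechet_derivative (f i) (at x)) (at x)"
    using assms frechet_derivative_works by blast
  then have "((\<lambda>x. \<Prod>i\<in>I. f i x) has_derivative
      (\<lambda>y. \<Sum>i\<in>I. frechet_derivative (f i) (at x) y * (\<Prod>j\<in>I - {i}. f j x))) (at x)"
    by (rule has_derivative_prod)
  then show ?thesis unfolding differentiable_def by blast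
qed

lemma det_diff:
  fixes M :: "real^'m \<Rightarrow> real^'n::finite^'n"
  assumes "\<And>i j. (\<lambda>q. M q $ i $ j) differentiable (at p)"
  shows "(\<lambda>q. det (M q)) differentiable (at p)"
  unfolding det_def
  by (intro differentiable_sum ballI differentiable_mult differentiable_const differentiable_prod' assms) simp

lemma matinv_entry:
  fixes A :: "real^'n::finite^'n"
  assumes "invertible A"
  shows "matrix_inv A $ k $ l = det (\<chi> i j. if j = k then axis l 1 $ i else A $ i $ j) / det A"
proof -
  have d: "det A \<noteq> 0" using assms invertible_det_nz by blast
  have "A *v (matrix_inv A *v axis l 1) = axis l 1"
    by (simp add: matrix_vector_mul_assoc inv_props(1)[OF assms])
  then have "matrix_inv A *v axis l 1 = (\<chi> k. det (\<chi> i j. if j = k then axis l 1 $ i else A $ i $ j) / det A)"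
    using cramer[OF d] by blast
  then have "(matrix_inv A *v axis l 1) $ k = det (\<chi> i j. if j = k then axis l 1 $ i else A $ i $ j) / det A"
    by simp
  then show ?thesis by (simp add: matrix_vector_mult_basis column_def)
qed

lemma Hdiff:
  fixes G :: "real^'m::finite \<Rightarrow> real^'n::finite^'n"
  assumes U: "open U" "p \<in> U" and inv: "\<forall>q\<in>U. invertible (G q)"
    and gd: "\<And>i j. (\<lambda>q. G q $ i $ j) differentiable (at p)"
  shows "(\<lambda>q. matrix_inv (G q) $ k $ l) differentiable (at p)"
proof -
  have "(\<lambda>q. det (\<chi> i j. if j = k then axis l 1 $ i else G q $ i $ j) / det (G q)) differentiable (at p)"
  proof (rule differentiable_divide)
    show "(\<lambda>q. det (\<chi> i j. if j = k then axis l 1 $ i else G q $ i $ j)) differentiable (at p)"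
    proof (rule det_diff)
      fix i j show "(\<lambda>q. (\<chi> i j. if j = k then axis l 1 $ i else G q $ i $ j) $ i $ j) differentiable (at p)"
        by (cases "j = k") (simp_all add: gd)
    qed
    show "(\<lambda>q. det (G q)) differentiable (at p)" by (rule det_diff) (rule gd)
    show "det (G p) \<noteq> 0" using inv U invertible_det_nz by blast
  qed
  then show ?thesis
    by (rule diff_local[OF U(1,2), rotated]) (simp add: matinv_entry inv)
qed

lemma mat_mul_neg:
  fixes A B :: "real^'n::finite^'n"
  shows "A ** (- B) = - (A ** B)"
  by (simp add: matrix_matrix_mult_def vec_eq_iff sum_negf)

lemma Hderiv:
  fixes G :: "real^'m::finite \<Rightarrow> real^'n::finite^'n"
  assumes U: "open U" "p \<in> U" and inv: "\<forall>q\<in>U. invertible (G q)"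
    and gd: "\<And>i j. (\<lambda>q. G q $ i $ j) differentiable (at p)"
  shows "(\<chi> a b. pd (\<lambda>q. matrix_inv (G q) $ a $ b) i p)
     = - (matrix_inv (G p) ** (\<chi> a b. pd (\<lambda>q. G q $ a $ b) i p) ** matrix_inv (G p))"
proof -
  define H where "H q = matrix_inv (G q)" for q
  define dG where "dG = (\<chi> a b. pd (\<lambda>q. G q $ a $ b) i p)"
  define dH where "dH = (\<chi> a b. pd (\<lambda>q. H q $ a $ b) i p)"
  have hd: "\<And>a b. (\<lambda>q. H q $ a $ b) differentiable (at p)"
    unfolding H_def using Hdiff[OF U inv gd] .
  have eq: "G p ** dH = - (dG ** H p)"
  proof -
    have "(G p ** dH) $ a $ b = - ((dG ** H p) $ a $ b)" for a b
    proof -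
      have "pd (\<lambda>q. \<Sum>c\<in>UNIV. G q $ a $ c * H q $ c $ b) i p = pd (\<lambda>q. mat 1 $ a $ b) i p"
      proof (rule pd_local[OF U])
        fix q assume "q \<in> U"
        then have "G q ** H q = mat 1" using inv inv_props unfolding H_def by blast
        then have "(G q ** H q) $ a $ b = mat 1 $ a $ b" by simp
        then show "(\<Sum>c\<in>UNIV. G q $ a $ c * H q $ c $ b) = mat 1 $ a $ b"
          by (simp add: matrix_matrix_mult_def)
      qed
      also have "\<dots> = 0" by (rule pd_const)
      finally have "pd (\<lambda>q. \<Sum>c\<in>UNIV. G q $ a $ c * H q $ c $ b) i p = 0" .
      moreover have "pd (\<lambda>q. \<Sum>c\<in>UNIV. G q $ a $ c * H q $ c $ b) i p
          = (\<Sum>c\<in>UNIV. pd (\<lambda>q. G q $ a $ c) i p * H p $ c $ b + G p $ a $ c * pd (\<lambda>q. H q $ c $ b) i p)"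
        by (subst pd_sum) (auto intro!: differentiable_mult gd hd simp: pd_mult gd hd)
      ultimately show ?thesis
        by (simp add: matrix_matrix_mult_def dG_def dH_def sum.distrib eq_neg_iff_add_eq_0 add.commute)
    qed
    then show ?thesis by (simp add: vec_eq_iff)
  qed
  have "dH = (H p ** G p) ** dH" by (simp add: H_def inv_props(2)[OF inv[rule_format, OF U(2)]])
  also have "\<dots> = H p ** (G p ** dH)" by (simp add: matrix_mul_assoc)
  also have "\<dots> = H p ** (- (dG ** H p))" by (simp only: eq)
  also have "\<dots> = - (H p ** dG ** H p)" by (simp add: mat_mul_neg matrix_mul_assoc)
  finally show ?thesis unfolding dH_def dG_def H_def .
qed



lemma smooth_diff: "smooth_on U f \<Longrightarrow> q \<in> U \<Longrightarrow> f differentiable (at q)"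
  unfolding smooth_on_def by (metis iter_pd.simps(1))

lemma smooth_pd_diff: "smooth_on U f \<Longrightarrow> q \<in> U \<Longrightarrow> pd f i differentiable (at q)"
  unfolding smooth_on_def by (metis iter_pd.simps)

lemma smooth_schwarz:
  assumes "smooth_on U f" "open U" "p \<in> U"
  shows "pd (pd f j) i p = pd (pd f i) j p"
  using schwarz[OF assms(2,3)] smooth_diff[OF assms(1)] smooth_pd_diff[OF assms(1) assms(3)] by metis

lemma transpose_mv: "(transpose A *v x) $ l = (\<Sum>k\<in>UNIV. A $ k $ l * x $ k)"
  by (simp add: transpose_def matrix_vector_mult_def mult_ac)

locale rm =
  fixes U :: "(real^'n::finite) set" and g :: "real^'n \<Rightarrow> real^'n^'n" and p :: "real^'n"
  assumes U: "open U" and pU: "p \<in> U" and rg: "riem_metric_on U g"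
begin

lemma smooth_g: "smooth_on U (\<lambda>q. g q $ i $ j)"
  using rg unfolding riem_metric_on_def by blast

lemma gsym: "q \<in> U \<Longrightarrow> g q $ i $ j = g q $ j $ i"
  using rg unfolding riem_metric_on_def by blast

lemma gpos: "q \<in> U \<Longrightarrow> x \<noteq> 0 \<Longrightarrow> x \<bullet> (g q *v x) > 0"
  using rg unfolding riem_metric_on_def by blast

lemma gdiff: "q \<in> U \<Longrightarrow> (\<lambda>q. g q $ i $ j) differentiable (at q)"
  using smooth_diff[OF smooth_g] .

lemma gpd_diff: "q \<in> U \<Longrightarrow> pd (\<lambda>q. g q $ i $ j) k differentiable (at q)"
  using smooth_pd_diff[OF smooth_g] .

lemma pdg_sym: "q \<in> U \<Longrightarrow> pd (\<lambda>q. g q $ i $ j) l q = pd (\<lambda>q. g q $ j $ i) l q"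
  by (rule pd_local[OF U]) (simp_all add: gsym)

lemma g_transpose: "q \<in> U \<Longrightarrow> transpose (g q) = g q"
  by (simp add: transpose_def vec_eq_iff gsym)

lemma g_inv: "q \<in> U \<Longrightarrow> invertible (g q)"
proof -
  assume q: "q \<in> U"
  have "inj ((*v) (g q))"
  proof (rule injI)
    fix x y assume e: "g q *v x = g q *v y"
    show "x = y"
    proof (rule ccontr)
      assume "x \<noteq> y"
      then have "(x - y) \<bullet> (g q *v (x - y)) > 0" using gpos[OF q] by simp
      moreover have "g q *v (x - y) = 0" using e by (simp add: matrix_vector_mult_diff_distrib)
      ultimately show False by simp
    qed
  qed
  then show ?thesis using matrix_left_invertible_injective invertible_left_inverse by blast
qed

lemma GH: "q \<in> U \<Longrightarrow> g q ** ginv g q = mat 1"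
  unfolding ginv_def using inv_props(1)[OF g_inv] .

lemma HG: "q \<in> U \<Longrightarrow> ginv g q ** g q = mat 1"
  unfolding ginv_def using inv_props(2)[OF g_inv] .

lemma H_transpose: "q \<in> U \<Longrightarrow> transpose (ginv g q) = ginv g q"
proof -
  assume q: "q \<in> U"
  have "transpose (ginv g q) ** g q = mat 1"
    using arg_cong[OF GH[OF q], of transpose] by (simp add: matrix_transpose_mul g_transpose[OF q] transpose_mat)
  then have "transpose (ginv g q) = transpose (ginv g q) ** (g q ** ginv g q)" by (simp only: GH[OF q] matrix_mul_rid)
  also have "\<dots> = ginv g q" by (simp add: matrix_mul_assoc \<open>transpose (ginv g q) ** g q = mat 1\<close>)
  finally show ?thesis .
qed

lemma Hsym: "q \<in> U \<Longrightarrow> ginv g q $ i $ j = ginv g q $ j $ i"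
  using H_transpose[of q] by (metis transpose_def vec_lambda_beta)

lemma Hdiff': "(\<lambda>q. ginv g q $ a $ b) differentiable (at p)"
  unfolding ginv_def using Hdiff[OF U pU] g_inv gdiff[OF pU] by blast

lemma GHX: "g p ** (ginv g p ** X) = X"
  by (metis GH matrix_mul_assoc matrix_mul_lid pU)

definition dG :: "'n \<Rightarrow> real^'n^'n" where "dG i = (\<chi> a b. pd (\<lambda>q. g q $ a $ b) i p)"
definition dH :: "'n \<Rightarrow> real^'n^'n" where "dH i = (\<chi> a b. pd (\<lambda>q. ginv g q $ a $ b) i p)"

lemma dH_eq: "dH i = - (ginv g p ** dG i ** ginv g p)"
  unfolding dH_def dG_def ginv_def using Hderiv[OF U pU] g_inv gdiff[OF pU] by blast

definition Ch :: "'n \<Rightarrow> real^'n^'n" where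
  "Ch i = (\<chi> m j. (pd (\<lambda>q. g q $ j $ m) i p + pd (\<lambda>q. g q $ i $ m) j p - pd (\<lambda>q. g q $ i $ j) m p) / 2)"

lemma Gam_Ch: "Gam g p k i j = (ginv g p ** Ch i) $ k $ j"
proof -
  have "(ginv g p ** Ch i) $ k $ j = (\<Sum>l\<in>UNIV. ginv g p $ k $ l *
      (pd (\<lambda>q. g q $ j $ l) i p + pd (\<lambda>q. g q $ i $ l) j p - pd (\<lambda>q. g q $ i $ j) l p)) / 2"
    by (simp add: matrix_matrix_mult_def Ch_def sum_divide_distrib)
  then show ?thesis unfolding Gam_def by simp
qed

lemma Ch_sum: "Ch i $ l $ j + Ch i $ j $ l = dG i $ l $ j"
  using pdg_sym[OF pU, of j l i] by (simp add: Ch_def dG_def field_simps)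

lemma K3:
  assumes sv: "smooth_on U v"
  shows "g p *v cov g p (grad g v) x = (\<chi> l. \<Sum>i\<in>UNIV. x$i * hess g v p i l)"
proof -
  define H where "H = ginv g p"
  define G where "G = g p"
  define u where "u = (\<chi> j. pd v j p)"
  define gr where "gr = grad g v p"
  define du where "du i = (\<chi> j. pd (pd v j) i p)" for i
  have gr: "gr = H *v u" unfolding gr_def grad_def H_def u_def ..
  have gradk: "grad g v q $ k = (\<Sum>j\<in>UNIV. ginv g q $ k $ j * pd v j q)" for q k
    by (simp add: grad_def matrix_vector_mult_def)
  have pvd: "pd v j differentiable (at p)" for j using smooth_pd_diff[OF sv pU] .
  have dgk: "(\<lambda>q. grad g v q $ k) differentiable (at p)" for k
    unfolding gradk by (intro differentiable_sum ballI differentiable_mult Hdiff' pvd) simp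
  have pdgk: "pd (\<lambda>q. grad g v q $ k) i p = (dH i *v u) $ k + (H *v du i) $ k" for k i
  proof -
    have "pd (\<lambda>q. grad g v q $ k) i p = pd (\<lambda>q. \<Sum>j\<in>UNIV. ginv g q $ k $ j * pd v j q) i p"
      unfolding gradk ..
    also have "\<dots> = (\<Sum>j\<in>UNIV. pd (\<lambda>q. ginv g q $ k $ j * pd v j q) i p)"
      by (rule pd_sum) (auto intro!: differentiable_mult Hdiff' pvd)
    also have "\<dots> = (\<Sum>j\<in>UNIV. pd (\<lambda>q. ginv g q $ k $ j) i p * pd v j p + ginv g p $ k $ j * pd (pd v j) i p)"
    proof (rule sum.cong[OF refl])
      fix j
      have "pd (\<lambda>q. ginv g q $ k $ j * pd v j q) i p = pd (\<lambda>q. ginv g q $ k $ j) i p * pd v j p + ginv g p $ k $ j * pd (\<lambda>q. pd v j q) i p"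
        by (rule pd_mult[OF Hdiff']) (simp add: pvd)
      then show "pd (\<lambda>q. ginv g q $ k $ j * pd v j q) i p = pd (\<lambda>q. ginv g q $ k $ j) i p * pd v j p + ginv g p $ k $ j * pd (pd v j) i p"
        by simp
    qed
    also have "\<dots> = (dH i *v u) $ k + (H *v du i) $ k"
      by (simp add: matrix_vector_mult_def dH_def u_def H_def du_def sum.distrib)
    finally show ?thesis .
  qed
  define W where "W i = dH i *v u + H *v du i + (H ** Ch i) *v gr" for i
  have cov_eq: "cov g p (grad g v) x = (\<Sum>i\<in>UNIV. x$i *\<^sub>R W i)"
  proof -
    have dd: "dd (grad g v) p x = (\<chi> k. \<Sum>i\<in>UNIV. x$i * ((dH i *v u) $ k + (H *v du i) $ k))"
      using dd_vec[OF dgk, of x] by (simp add: pdgk)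
    have "cov g p (grad g v) x $ k = (\<Sum>i\<in>UNIV. x$i *\<^sub>R W i) $ k" for k
    proof -
      have "(\<Sum>i\<in>UNIV. \<Sum>j\<in>UNIV. Gam g p k i j * x $ i * grad g v p $ j)
          = (\<Sum>i\<in>UNIV. x$i * ((H ** Ch i) *v gr) $ k)"
        by (simp add: Gam_Ch H_def gr_def matrix_vector_mult_def sum_distrib_left mult_ac)
      then show ?thesis
        unfolding cov_def dd by (simp add: W_def sum_component algebra_simps sum.distrib)
    qed
    then show ?thesis by (simp add: vec_eq_iff)
  qed
  have GW: "G *v W i = du i + (Ch i - dG i) *v gr" for i
  proof -
    have GHm: "G ** H = mat 1" unfolding G_def H_def using GH[OF pU] .
    have "G ** dH i = - (dG i ** H)"
      by (simp add: dH_eq mat_mul_neg G_def H_def matrix_mul_assoc GH[OF pU])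
    then have "G *v (dH i *v u) = - (dG i *v gr)"
      by (simp add: matrix_vector_mul_assoc gr matrix_mul_assoc)
        (simp add: vec_eq_iff matrix_vector_mult_def matrix_matrix_mult_def sum_negf)
    moreover have "G *v (H *v du i) = du i" by (simp add: matrix_vector_mul_assoc GHm)
    moreover have "G *v ((H ** Ch i) *v gr) = Ch i *v gr"
      by (simp add: matrix_vector_mul_assoc matrix_mul_assoc GHm)
    ultimately show ?thesis
      by (simp add: W_def matrix_vector_right_distrib matrix_vector_mult_diff_rdistrib)
  qed
  have hess_eq: "hess g v p i l = du i $ l - (transpose (Ch i) *v gr) $ l" for i l
  proof -
    have "(\<Sum>k\<in>UNIV. Gam g p k i l * pd v k p) = (transpose (H ** Ch i) *v u) $ l"
      unfolding transpose_mv by (simp add: Gam_Ch H_def u_def)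
    also have "\<dots> = (transpose (Ch i) *v gr) $ l"
      by (simp add: matrix_transpose_mul H_def H_transpose[OF pU] matrix_vector_mul_assoc gr)
    finally show ?thesis unfolding hess_def du_def by simp
  qed
  have comp: "(G *v W i) $ l = hess g v p i l" for i l
  proof -
    have "((Ch i - dG i) *v gr) $ l = - (transpose (Ch i) *v gr) $ l"
    proof -
      have "((Ch i - dG i) *v gr) $ l = (\<Sum>j\<in>UNIV. (Ch i $ l $ j - dG i $ l $ j) * gr $ j)"
        by (simp add: matrix_vector_mult_def)
      also have "\<dots> = (\<Sum>j\<in>UNIV. - (Ch i $ j $ l * gr $ j))"
        by (rule sum.cong[OF refl]) (simp add: Ch_sum[of i l, symmetric] algebra_simps)
      also have "\<dots> = - (transpose (Ch i) *v gr) $ l"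
        unfolding transpose_mv by (simp add: sum_negf)
      finally show ?thesis .
    qed
    then show ?thesis using GW[of i] hess_eq[of i l] by simp
  qed
  have "g p *v cov g p (grad g v) x = (\<Sum>i\<in>UNIV. x$i *\<^sub>R (G *v W i))"
    unfolding cov_eq G_def by (simp add: vec.sum matrix_vector_mult_scaleR)
  then show ?thesis by (simp add: vec_eq_iff sum_component comp)
qed

end


definition tr :: "real^'n::finite^'n \<Rightarrow> real" where "tr M = (\<Sum>k\<in>UNIV. M $ k $ k)"

lemma tr_comm: "tr (X ** Y) = tr (Y ** X)"
proof -
  have "tr (X ** Y) = (\<Sum>k\<in>UNIV. \<Sum>j\<in>UNIV. X$k$j * Y$j$k)" by (simp add: tr_def matrix_matrix_mult_def)
  also have "\<dots> = (\<Sum>j\<in>UNIV. \<Sum>k\<in>UNIV. X$k$j * Y$j$k)" by (rule sum.swap)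
  also have "\<dots> = tr (Y ** X)" by (simp add: tr_def matrix_matrix_mult_def mult.commute)
  finally show ?thesis .
qed

lemma tr_neg: "tr ((- X) ** Y) = - tr (X ** Y)"
  unfolding tr_def matrix_matrix_mult_def by (simp add: sum_negf)

lemma sum_prod_tr: "(\<Sum>k\<in>UNIV. \<Sum>l\<in>UNIV. A $ k $ l * B $ k $ l) = tr (A ** transpose B)"
  unfolding tr_def matrix_matrix_mult_def transpose_def by simp

context rm
begin

lemma Gam_sym: "q \<in> U \<Longrightarrow> Gam g q k i j = Gam g q k j i"
  unfolding Gam_def by (rule arg_cong[where f="\<lambda>x. 1/2 * x"], rule sum.cong[OF refl]) (simp add: pdg_sym[of q j i] algebra_simps)

lemma Gam_diff: "(\<lambda>q. Gam g q k i j) differentiable (at p)"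
  unfolding Gam_def
  by (intro differentiable_mult differentiable_const differentiable_sum ballI differentiable_add
      differentiable_diff Hdiff' gpd_diff[OF pU] finite_UNIV) simp

lemma dG_sym: "dG i $ a $ b = dG i $ b $ a"
  unfolding dG_def using pdg_sym[OF pU] by simp

lemma dG_transpose: "transpose (dG i) = dG i"
  by (simp add: transpose_def vec_eq_iff dG_sym)

lemma trace_Gam: "q \<in> U \<Longrightarrow> (\<Sum>k\<in>UNIV. Gam g q k k i)
    = 1/2 * (\<Sum>k\<in>UNIV. \<Sum>l\<in>UNIV. ginv g q $ k $ l * pd (\<lambda>q. g q $ k $ l) i q)"
proof -
  assume q: "q \<in> U"
  let ?H = "ginv g q"
  have sw: "(\<Sum>k\<in>UNIV. \<Sum>l\<in>UNIV. ?H $ k $ l * pd (\<lambda>q. g q $ i $ l) k q)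
      = (\<Sum>k\<in>UNIV. \<Sum>l\<in>UNIV. ?H $ k $ l * pd (\<lambda>q. g q $ k $ i) l q)"
  proof -
    have "(\<Sum>k\<in>UNIV. \<Sum>l\<in>UNIV. ?H $ k $ l * pd (\<lambda>q. g q $ i $ l) k q)
        = (\<Sum>l\<in>UNIV. \<Sum>k\<in>UNIV. ?H $ k $ l * pd (\<lambda>q. g q $ i $ l) k q)"
      by (rule sum.swap)
    also have "\<dots> = (\<Sum>l\<in>UNIV. \<Sum>k\<in>UNIV. ?H $ l $ k * pd (\<lambda>q. g q $ l $ i) k q)"
    proof (intro sum.cong refl)
      fix l k
      show "?H $ k $ l * pd (\<lambda>q. g q $ i $ l) k q = ?H $ l $ k * pd (\<lambda>q. g q $ l $ i) k q"
        using Hsym[OF q, of k l] pdg_sym[OF q, of i l k] by simp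
    qed
    finally show ?thesis .
  qed
  have "(\<Sum>k\<in>UNIV. Gam g q k k i) = 1/2 * (\<Sum>k\<in>UNIV. \<Sum>l\<in>UNIV. ?H $ k $ l *
      (pd (\<lambda>q. g q $ i $ l) k q + pd (\<lambda>q. g q $ k $ l) i q - pd (\<lambda>q. g q $ k $ i) l q))"
    unfolding Gam_def ginv_def by (simp add: sum_distrib_left)
  also have "\<dots> = 1/2 * ((\<Sum>k\<in>UNIV. \<Sum>l\<in>UNIV. ?H $ k $ l * pd (\<lambda>q. g q $ i $ l) k q)
      + (\<Sum>k\<in>UNIV. \<Sum>l\<in>UNIV. ?H $ k $ l * pd (\<lambda>q. g q $ k $ l) i q)
      - (\<Sum>k\<in>UNIV. \<Sum>l\<in>UNIV. ?H $ k $ l * pd (\<lambda>q. g q $ k $ i) l q))"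
    by (simp add: algebra_simps sum.distrib sum_subtractf)
  finally show ?thesis using sw by simp
qed

lemma Ric_sym: "Ric g p i j = Ric g p j i"
proof -
  have A: "pd (\<lambda>q. Gam g q k i j) k p = pd (\<lambda>q. Gam g q k j i) k p" for k
    by (rule pd_local[OF U pU]) (simp add: Gam_sym)
  define T where "T = (\<lambda>i q. \<Sum>k\<in>UNIV. \<Sum>l\<in>UNIV. ginv g q $ k $ l * pd (\<lambda>q. g q $ k $ l) i q)"
  have Tdiff: "T i differentiable (at p)" for i
    unfolding T_def by (intro differentiable_sum ballI differentiable_mult Hdiff' gpd_diff[OF pU]) simp_all
  have B1: "(\<Sum>k\<in>UNIV. pd (\<lambda>q. Gam g q k k i) j p) = 1/2 * pd (T i) j p" for i j
  proof -
    have "(\<Sum>k\<in>UNIV. pd (\<lambda>q. Gam g q k k i) j p) = pd (\<lambda>q. \<Sum>k\<in>UNIV. Gam g q k k i) j p"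
      by (rule pd_sum[symmetric]) (simp_all add: Gam_diff)
    also have "\<dots> = pd (\<lambda>q. 1/2 * T i q) j p"
      by (rule pd_local[OF U pU]) (simp add: trace_Gam T_def)
    also have "\<dots> = 1/2 * pd (T i) j p"
      by (rule pd_cmult) (rule Tdiff)
    finally show ?thesis .
  qed
  have B2: "pd (T i) j p = (\<Sum>k\<in>UNIV. \<Sum>l\<in>UNIV. dH j $ k $ l * dG i $ k $ l)
      + (\<Sum>k\<in>UNIV. \<Sum>l\<in>UNIV. ginv g p $ k $ l * pd (pd (\<lambda>q. g q $ k $ l) i) j p)" for i j
  proof -
    have "pd (T i) j p = (\<Sum>k\<in>UNIV. \<Sum>l\<in>UNIV. pd (\<lambda>q. ginv g q $ k $ l * pd (\<lambda>q. g q $ k $ l) i q) j p)"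
    proof -
      have "pd (T i) j p = (\<Sum>k\<in>UNIV. pd (\<lambda>q. \<Sum>l\<in>UNIV. ginv g q $ k $ l * pd (\<lambda>q. g q $ k $ l) i q) j p)"
      proof -
        have dk: "(\<lambda>q. \<Sum>l\<in>UNIV. ginv g q $ k $ l * pd (\<lambda>q. g q $ k $ l) i q) differentiable (at p)" for k
          by (intro differentiable_sum ballI differentiable_mult Hdiff' gpd_diff[OF pU]) simp_all
        show ?thesis unfolding T_def by (rule pd_sum) (simp_all add: dk)
      qed
      also have "\<dots> = (\<Sum>k\<in>UNIV. \<Sum>l\<in>UNIV. pd (\<lambda>q. ginv g q $ k $ l * pd (\<lambda>q. g q $ k $ l) i q) j p)"
        by (rule sum.cong[OF refl], rule pd_sum) (simp_all add: differentiable_mult Hdiff' gpd_diff[OF pU])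
      finally show ?thesis .
    qed
    also have "\<dots> = (\<Sum>k\<in>UNIV. \<Sum>l\<in>UNIV. dH j $ k $ l * dG i $ k $ l
        + ginv g p $ k $ l * pd (pd (\<lambda>q. g q $ k $ l) i) j p)"
    proof (rule sum.cong[OF refl], rule sum.cong[OF refl])
      fix k l
      have "pd (\<lambda>q. ginv g q $ k $ l * pd (\<lambda>q. g q $ k $ l) i q) j p
          = pd (\<lambda>q. ginv g q $ k $ l) j p * pd (\<lambda>q. g q $ k $ l) i p + ginv g p $ k $ l * pd (\<lambda>q. pd (\<lambda>q. g q $ k $ l) i q) j p"
        by (rule pd_mult[OF Hdiff']) (simp add: gpd_diff[OF pU])
      then show "pd (\<lambda>q. ginv g q $ k $ l * pd (\<lambda>q. g q $ k $ l) i q) j p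
          = dH j $ k $ l * dG i $ k $ l + ginv g p $ k $ l * pd (pd (\<lambda>q. g q $ k $ l) i) j p"
        by (simp add: dH_def dG_def)
    qed
    finally show ?thesis by (simp add: sum.distrib)
  qed
  have tsym: "(\<Sum>k\<in>UNIV. \<Sum>l\<in>UNIV. dH j $ k $ l * dG i $ k $ l) = (\<Sum>k\<in>UNIV. \<Sum>l\<in>UNIV. dH i $ k $ l * dG j $ k $ l)" for i j
  proof -
    let ?H = "ginv g p"
    have e: "(\<Sum>k\<in>UNIV. \<Sum>l\<in>UNIV. dH j $ k $ l * dG i $ k $ l) = - tr (?H ** dG j ** ?H ** dG i)" for i j
    proof -
      have "(\<Sum>k\<in>UNIV. \<Sum>l\<in>UNIV. dH j $ k $ l * dG i $ k $ l) = tr (dH j ** dG i)"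
        by (simp only: sum_prod_tr dG_transpose)
      also have "\<dots> = - tr (?H ** dG j ** ?H ** dG i)"
        by (simp only: dH_eq tr_neg)
      finally show ?thesis .
    qed
    have "tr (?H ** dG j ** ?H ** dG i) = tr (?H ** dG i ** ?H ** dG j)"
      using tr_comm[of "?H ** dG j" "?H ** dG i"] by (simp only: matrix_mul_assoc)
    then show ?thesis by (simp only: e)
  qed
  have ssym: "pd (pd (\<lambda>q. g q $ k $ l) i) j p = pd (pd (\<lambda>q. g q $ k $ l) j) i p" for k l i j
    using smooth_schwarz[OF smooth_g U pU] by metis
  have B: "(\<Sum>k\<in>UNIV. pd (\<lambda>q. Gam g q k k i) j p) = (\<Sum>k\<in>UNIV. pd (\<lambda>q. Gam g q k k j) i p)"
    unfolding B1 B2 using tsym[of j i] ssym by simp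
  have C: "(\<Sum>k\<in>UNIV. \<Sum>l\<in>UNIV. Gam g p k k l * Gam g p l i j) = (\<Sum>k\<in>UNIV. \<Sum>l\<in>UNIV. Gam g p k k l * Gam g p l j i)"
    by (simp add: Gam_sym[OF pU, of _ i j])
  have Dsym: "(\<Sum>k\<in>UNIV. \<Sum>l\<in>UNIV. Gam g p k j l * Gam g p l k i) = (\<Sum>k\<in>UNIV. \<Sum>l\<in>UNIV. Gam g p k i l * Gam g p l k j)"
  proof -
    have "(\<Sum>k\<in>UNIV. \<Sum>l\<in>UNIV. Gam g p k j l * Gam g p l k i) = (\<Sum>l\<in>UNIV. \<Sum>k\<in>UNIV. Gam g p k j l * Gam g p l k i)"
      by (rule sum.swap)
    also have "\<dots> = (\<Sum>l\<in>UNIV. \<Sum>k\<in>UNIV. Gam g p l i k * Gam g p k l j)"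
      by (rule sum.cong[OF refl], rule sum.cong[OF refl]) (simp add: Gam_sym[OF pU, of _ j] Gam_sym[OF pU, of _ _ i] mult.commute)
    finally show ?thesis .
  qed
  have "Ric g p i j = (\<Sum>k\<in>UNIV. pd (\<lambda>q. Gam g q k i j) k p) - (\<Sum>k\<in>UNIV. pd (\<lambda>q. Gam g q k k i) j p)
      + (\<Sum>k\<in>UNIV. \<Sum>l\<in>UNIV. Gam g p k k l * Gam g p l i j) - (\<Sum>k\<in>UNIV. \<Sum>l\<in>UNIV. Gam g p k j l * Gam g p l k i)" for i j
    unfolding Ric_def by (simp add: sum.distrib sum_subtractf)
  then show ?thesis using A B C Dsym by simp
qed

lemma hess_sym:
  assumes sv: "smooth_on U v"
  shows "hess g v p i j = hess g v p j i"
  unfolding hess_def using smooth_schwarz[OF sv U pU, of i j] Gam_sym[OF pU] by simp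

end


lemma scalar_id:
  fixes n m v Sc L N \<mu> :: real
  assumes n0: "n \<noteq> 0" and n1: "n - 1 \<noteq> 0" and a0: "m + n - 1 \<noteq> 0" and v0: "v \<noteq> 0"
  defines "J \<equiv> Sc / (2 * (n - 1))"
  defines "\<rho> \<equiv> (1/n) * (- (L + J * v))"
  defines "WW \<equiv> ((Sc - 2 * m / v * L - m * (m - 1) / v^2 * N) + m * \<mu> / v^2) / (2 * (m + n - 1))"
  defines "\<kappa> \<equiv> (\<mu> - (m - 1) * (2 * v * \<rho> + N)) / (2 * (m + n - 1) * v)"
  shows "J - WW = - (m / v) * (\<rho> + \<kappa>)"
proof -
  define a where "a = m + n - 1"
  define d where "d = n - 1"
  have a: "a \<noteq> 0" and d: "d \<noteq> 0" using a0 n1 by (simp_all add: a_def d_def)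
  have f1: "2 * d * J = Sc" unfolding J_def d_def[symmetric] using d by simp
  have f2: "n * \<rho> = - (L + J * v)" unfolding \<rho>_def using n0 by simp
  have f3: "2 * a * v^2 * WW = v^2 * Sc - 2 * m * v * L - m * (m - 1) * N + m * \<mu>"
    unfolding WW_def a_def[symmetric] using a v0 by (simp add: field_simps power2_eq_square)
  have f4: "2 * a * v * \<kappa> = \<mu> - (m - 1) * (2 * v * \<rho> + N)"
    unfolding \<kappa>_def a_def[symmetric] using a v0 by (simp add: field_simps)
  have e: "2 * a * v^2 * (J - WW + (m / v) * (\<rho> + \<kappa>))
      = 2 * a * v^2 * J - 2 * a * v^2 * WW + 2 * a * v * m * \<rho> + m * (2 * a * v * \<kappa>)"
    using v0 by (simp add: field_simps power2_eq_square)
  have "2 * a * v^2 * (J - WW + (m / v) * (\<rho> + \<kappa>)) = 2 * m * v * (n * \<rho> + L + J * v) + v^2 * (2 * d * J - Sc)"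
    unfolding e f3 f4 unfolding a_def d_def by (simp add: algebra_simps power2_eq_square)
  also have "\<dots> = 0" using f1 f2 by simp
  finally have "2 * a * v^2 * (J - WW + (m / v) * (\<rho> + \<kappa>)) = 0" .
  then have "J - WW + (m / v) * (\<rho> + \<kappa>) = 0" using a v0 by simp
  then show ?thesis by (simp add: algebra_simps)
qed

lemma entry_id:
  fixes n m v R S h gg J W c r :: real
  assumes n2: "n - 2 \<noteq> 0" and b0: "m + n - 2 \<noteq> 0" and v0: "v \<noteq> 0"
    and S: "S = (R - J * gg) / (n - 2)"
    and sc: "J - W = - (m / v) * r"
    and c: "c = m / (v * (m + n - 2))"
  shows "((R - m / v * h) - W * gg) / (m + n - 2) = S - c * (h + v * S + r * gg)"
proof -
  define b where "b = m + n - 2"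
  have b: "b \<noteq> 0" using b0 by (simp add: b_def)
  have R: "R = (n - 2) * S + J * gg" using S n2 by (simp add: field_simps)
  have W: "W = J + (m / v) * r" using sc by simp
  have "(R - m / v * h) - W * gg = (n - 2) * S - (m / v) * (h + r * gg)"
    unfolding R W by (simp add: algebra_simps)
  also have "\<dots> = b * S - (m / v) * (h + v * S + r * gg)"
    using v0 by (simp add: b_def algebra_simps)
  finally have "((R - m / v * h) - W * gg) / b = S - ((m / v) / b) * (h + v * S + r * gg)"
    using b by (simp add: diff_divide_distrib)
  then show ?thesis unfolding c b_def by (simp add: mult.commute)
qed


lemma tconn_fst: "fst (tconn g Pt p I x) = dd (\<lambda>q. fst (I q)) p x - gin g p (fst (snd (I p))) x"
  by (simp add: tconn_def Let_def)
lemma tconn_mid: "fst (snd (tconn g Pt p I x)) = cov g p (\<lambda>q. fst (snd (I q))) x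
    + fst (I p) *\<^sub>R (ginv g p *v ((\<chi> i j. Pt p i j) *v x)) + snd (snd (I p)) *\<^sub>R x"
  by (simp add: tconn_def Let_def)
lemma tconn_bot: "snd (snd (tconn g Pt p I x)) = dd (\<lambda>q. snd (snd (I q))) p x - x \<bullet> ((\<chi> i j. Pt p i j) *v fst (snd (I p)))"
  by (simp add: tconn_def Let_def)

lemma sym_dot:
  fixes A :: "real^'n::finite^'n"
  assumes "transpose A = A"
  shows "x \<bullet> (A *v y) = (A *v x) \<bullet> y"
proof -
  have "(A *v x) = x v* A" using transpose_matrix_vector[of A x] assms by simp
  then show ?thesis by (simp add: dot_lmul_matrix)
qed

lemma cov_zero: "cov g p (\<lambda>q. 0) x = 0"
  unfolding cov_def by (simp add: dd_const vec_eq_iff)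

theorem lemma5p8:
  fixes U :: "(real^'n::finite) set"
    and g :: "real^'n \<Rightarrow> real^'n^'n"
    and v :: "real^'n \<Rightarrow> real"
    and m \<mu> :: real
    and I :: "real^'n \<Rightarrow> 'n tractor"
  assumes "CARD('n) \<ge> 3"
    and "m \<notin> {- real CARD('n), 1 - real CARD('n), 2 - real CARD('n)}"
    and "open U"
    and "riem_metric_on U g"
    and "smooth_on U v" and "\<forall>q\<in>U. v q > 0"
    and "smooth_on U (\<lambda>q. fst (I q))" and "smooth_vf_on U (\<lambda>q. fst (snd (I q)))"
    and "smooth_on U (\<lambda>q. snd (snd (I q)))"
    and "p \<in> U"
  shows "tconn g (PW g v m \<mu>) p I x =
           tconn g (Sch g) p I x
           + (m / (v p * (m + real CARD('n) - 2))) *\<^sub>R tcontr g p (I p) (Btr g v m \<mu> p x) (Xtr p)"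
proof -
  interpret rm U g p using assms(3,4,10) by unfold_locales
  note sv = assms(5)
  define n where "n = real CARD('n)"
  have dn: "dimn TYPE('n) = n" by (simp add: dimn_def n_def)
  have n3: "n \<ge> 3" using assms(1) unfolding n_def by simp
  have n0: "n \<noteq> 0" and n1: "n - 1 \<noteq> 0" and n2: "n - 2 \<noteq> 0" using n3 by auto
  have mn1: "m + n - 1 \<noteq> 0" and mn2: "m + n - 2 \<noteq> 0" using assms(2) unfolding n_def by auto
  have vp: "v p > 0" using assms(6,10) by blast
  then have v0: "v p \<noteq> 0" by simp
  define c where "c = m / (v p * (m + n - 2))"
  define H where "H = ginv g p"
  define G where "G = g p"
  define S where "S = (\<chi> i j. Sch g p i j)"
  define PWm where "PWm = (\<chi> i j. PW g v m \<mu> p i j)"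
  define Hm where "Hm = (\<chi> i j. hess g v p i j)"
  define \<rho>J where "\<rho>J = (1/n) * (- (lap g v p + Jsc g p * v p))"
  have Jtr_eq: "Jtr g v q = (v q, grad g v q, (1/n) * (- (lap g v q + Jsc g q * v q)))" for q
    unfolding Jtr_def dn using n0 by simp
  have JtrF: "(\<lambda>q. fst (Jtr g v q)) = v" by (simp add: Jtr_eq)
  have JtrM: "(\<lambda>q. fst (snd (Jtr g v q))) = grad g v" by (simp add: Jtr_eq)
  have tmJ: "tmetric g p (Jtr g v p) (Jtr g v p) = 2 * v p * \<rho>J + gin g p (grad g v p) (grad g v p)"
    by (simp add: tmetric_def Jtr_eq \<rho>J_def)
  define \<kappa> where "\<kappa> = (\<mu> - (m - 1) * tmetric g p (Jtr g v p) (Jtr g v p)) / (2 * (m + n - 1) * v p)"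
  define Bm where "Bm = cov g p (grad g v) x + v p *\<^sub>R (H *v (S *v x)) + (\<rho>J + \<kappa>) *\<^sub>R x"
  have TX: "tconn g (Sch g) p Xtr x = (0, x, 0)"
    by (simp add: tconn_def Let_def Xtr_def dd_const cov_zero gin_def)
  have K1: "dd v p x = gin g p (grad g v p) x"
  proof -
    have "dd v p x = (\<Sum>i\<in>UNIV. x$i * pd v i p)" by (rule dd_expand[OF smooth_diff[OF sv pU]])
    also have "\<dots> = (\<chi> j. pd v j p) \<bullet> x" by (simp add: inner_vec_def mult.commute)
    also have "\<dots> = (\<chi> j. pd v j p) \<bullet> (ginv g p *v (g p *v x))"
      by (simp add: matrix_vector_mul_assoc HG[OF pU])
    also have "\<dots> = (ginv g p *v (\<chi> j. pd v j p)) \<bullet> (g p *v x)"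
      by (rule sym_dot[OF H_transpose[OF pU]])
    also have "\<dots> = gin g p (grad g v p) x" by (simp add: gin_def grad_def)
    finally show ?thesis .
  qed
  have Bfst: "fst (Btr g v m \<mu> p x) = 0"
    unfolding Btr_def using K1 by (simp add: tconn_fst JtrF Jtr_eq TX)
  have Bmid: "fst (snd (Btr g v m \<mu> p x)) = Bm"
    unfolding Btr_def Bm_def \<kappa>_def dn
    by (simp add: tconn_mid JtrM Jtr_eq TX H_def S_def algebra_simps \<rho>J_def)
  have GK3: "G *v cov g p (grad g v) x = Hm *v x"
    unfolding G_def K3[OF sv] Hm_def by (simp add: vec_eq_iff matrix_vector_mult_def hess_sym[OF sv] mult.commute)
  have GB: "G *v Bm = Hm *v x + v p *\<^sub>R (S *v x) + (\<rho>J + \<kappa>) *\<^sub>R (G *v x)"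
    unfolding Bm_def
    using GK3 unfolding G_def H_def
    by (simp add: matrix_vector_right_distrib matrix_vector_mult_scaleR matrix_vector_mul_assoc
        matrix_mul_assoc GH[OF pU])
  have scal: "Jsc g p - JW g v m \<mu> p = - (m / v p) * (\<rho>J + \<kappa>)"
  proof -
    have "Jsc g p = Scal g p / (2 * (n - 1))" by (simp add: Jsc_def dn)
    moreover have "JW g v m \<mu> p = ((Scal g p - 2 * m / v p * lap g v p - m * (m - 1) / (v p)^2 * gin g p (grad g v p) (grad g v p))
        + m * \<mu> / (v p)^2) / (2 * (m + n - 1))" by (simp add: JW_def R_phi_def dn)
    moreover have "\<rho>J = (1/n) * (- (lap g v p + Scal g p / (2 * (n - 1)) * v p))" by (simp add: \<rho>J_def Jsc_def dn)
    moreover have "\<kappa> = (\<mu> - (m - 1) * (2 * v p * ((1/n) * (- (lap g v p + Scal g p / (2 * (n - 1)) * v p)))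
        + gin g p (grad g v p) (grad g v p))) / (2 * (m + n - 1) * v p)"
      by (simp add: \<kappa>_def tmJ \<rho>J_def Jsc_def dn)
    ultimately show ?thesis using scalar_id[OF n0 n1 mn1 v0] by simp
  qed
  have PWent: "PW g v m \<mu> p a b = Sch g p a b - c * (hess g v p a b + v p * Sch g p a b + (\<rho>J + \<kappa>) * g p $ a $ b)" for a b
    unfolding PW_def Ric_phi_def dn
    by (rule entry_id[OF n2 mn2 v0 _ scal c_def]) (simp add: Sch_def dn)
  have PWm_eq: "PWm = S - c *\<^sub>R (Hm + v p *\<^sub>R S + (\<rho>J + \<kappa>) *\<^sub>R G)"
    by (simp add: vec_eq_iff PWm_def S_def Hm_def G_def PWent)
  have V: "PWm *v x = S *v x - c *\<^sub>R (G *v Bm)"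
    unfolding PWm_eq GB
    by (simp add: vec_eq_iff matrix_vector_mult_def sum_subtractf sum.distrib sum_distrib_left algebra_simps)
  have S_t: "transpose S = S"
    by (simp add: S_def transpose_def vec_eq_iff Sch_def Ric_sym gsym[OF pU])
  have PW_t: "transpose PWm = PWm"
    by (simp add: PWm_def transpose_def vec_eq_iff PW_def Ric_phi_def Ric_sym hess_sym[OF sv] gsym[OF pU])
  have G_t: "transpose G = G" unfolding G_def by (rule g_transpose[OF pU])
  define \<sigma> where "\<sigma> = fst (I p)"
  define \<omega> where "\<omega> = fst (snd (I p))"
  define bb where "bb = snd (snd (Btr g v m \<mu> p x))"
  have Beq: "Btr g v m \<mu> p x = (0, Bm, bb)"
    using Bfst Bmid unfolding bb_def by (metis prod.collapse)
  have TC: "tcontr g p (I p) (Btr g v m \<mu> p x) (Xtr p) = (0, - (\<sigma> *\<^sub>R Bm), gin g p Bm \<omega>)"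
    unfolding Beq by (simp add: tcontr_def tmetric_def Xtr_def \<sigma>_def \<omega>_def gin_def)
  show ?thesis
  proof (rule prod_eqI)
    show "fst (tconn g (PW g v m \<mu>) p I x) = fst (tconn g (Sch g) p I x
        + (m / (v p * (m + real CARD('n) - 2))) *\<^sub>R tcontr g p (I p) (Btr g v m \<mu> p x) (Xtr p))"
      by (simp add: tconn_fst TC)
    have mid: "H *v (PWm *v x) = H *v (S *v x) - c *\<^sub>R Bm"
      unfolding V by (simp add: matrix_vector_mult_diff_distrib matrix_vector_mult_scaleR
          matrix_vector_mul_assoc H_def G_def HG[OF pU])
    have bot: "x \<bullet> (PWm *v \<omega>) = x \<bullet> (S *v \<omega>) - c * gin g p Bm \<omega>"
    proof -
      have "x \<bullet> (PWm *v \<omega>) = (PWm *v x) \<bullet> \<omega>" by (rule sym_dot[OF PW_t])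
      also have "\<dots> = (S *v x) \<bullet> \<omega> - c * ((G *v Bm) \<bullet> \<omega>)" unfolding V by (simp add: inner_diff_left)
      also have "(S *v x) \<bullet> \<omega> = x \<bullet> (S *v \<omega>)" by (rule sym_dot[OF S_t, symmetric])
      also have "(G *v Bm) \<bullet> \<omega> = gin g p Bm \<omega>" unfolding gin_def G_def by (rule sym_dot[OF g_transpose[OF pU], symmetric])
      finally show ?thesis .
    qed
    have c_eq: "m / (v p * (m + real CARD('n) - 2)) = c" by (simp add: c_def n_def)
    define \<rho> where "\<rho> = snd (snd (I p))"
    show "snd (tconn g (PW g v m \<mu>) p I x) = snd (tconn g (Sch g) p I x
        + (m / (v p * (m + real CARD('n) - 2))) *\<^sub>R tcontr g p (I p) (Btr g v m \<mu> p x) (Xtr p))"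
    proof (rule prod_eqI)
      have L: "fst (snd (tconn g (PW g v m \<mu>) p I x)) = cov g p (\<lambda>q. fst (snd (I q))) x + \<sigma> *\<^sub>R (H *v (PWm *v x)) + \<rho> *\<^sub>R x"
        by (simp add: tconn_mid PWm_def H_def \<sigma>_def \<rho>_def)
      have R: "fst (snd (tconn g (Sch g) p I x + (m / (v p * (m + real CARD('n) - 2))) *\<^sub>R tcontr g p (I p) (Btr g v m \<mu> p x) (Xtr p)))
          = cov g p (\<lambda>q. fst (snd (I q))) x + \<sigma> *\<^sub>R (H *v (S *v x)) + \<rho> *\<^sub>R x + c *\<^sub>R (- (\<sigma> *\<^sub>R Bm))"
        unfolding c_eq by (simp add: tconn_mid TC S_def H_def \<sigma>_def \<rho>_def)
      show "fst (snd (tconn g (PW g v m \<mu>) p I x)) = fst (snd (tconn g (Sch g) p I x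
        + (m / (v p * (m + real CARD('n) - 2))) *\<^sub>R tcontr g p (I p) (Btr g v m \<mu> p x) (Xtr p)))"
        unfolding L R mid by (simp add: algebra_simps)
      have Lb: "snd (snd (tconn g (PW g v m \<mu>) p I x)) = dd (\<lambda>q. snd (snd (I q))) p x - x \<bullet> (PWm *v \<omega>)"
        by (simp add: tconn_bot PWm_def \<omega>_def)
      have Rb: "snd (snd (tconn g (Sch g) p I x + (m / (v p * (m + real CARD('n) - 2))) *\<^sub>R tcontr g p (I p) (Btr g v m \<mu> p x) (Xtr p)))
          = dd (\<lambda>q. snd (snd (I q))) p x - x \<bullet> (S *v \<omega>) + c * gin g p Bm \<omega>"
        unfolding c_eq by (simp add: tconn_bot TC S_def \<omega>_def)
      show "snd (snd (tconn g (PW g v m \<mu>) p I x)) = snd (snd (tconn g (Sch g) p I x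
        + (m / (v p * (m + real CARD('n) - 2))) *\<^sub>R tcontr g p (I p) (Btr g v m \<mu> p x) (Xtr p)))"
        unfolding Lb Rb bot by simp
    qed
  qed
qed


end
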